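(* Let $b,n$ be positive integers, $c$ a nonnegative integer, and $a_2,\dots,a_n$ integers. With $\mathbf a=(0,0,a_2,\dots,a_n,-\sum_{j=2}^n a_j)$ and $\tilde{\mathbf a}=(0,a_2,\dots,a_n,-\sum_{j=2}^n a_j)$, $$K_{k^{1,b,c}_{n+2}}(\mathbf a)=K_{k^{c+1,b,c}_{n+1}}(\tilde{\mathbf a}).$$
   Context: For a positive integer $m$ and nonnegative integers $a,b,c$, $k_{m+2}^{a,b,c}$ is the directed multigraph on vertex set $\{0,1,\dots,m+1\}$ with edge $(0,i)$ of multiplicity $a$ and edge $(i,m+1)$ of multiplicity $b$ for each $i\in[m]$, and edge $(i,j)$ of multiplicity $c$ for $1\le i<j\le m$; edges $(i,j)$ are oriented $i\to j$. For such a graph $G$ on $\{0,\dots,m+1\}$ and a vector $\mathbf v=(v_0,\dots,v_{m+1})$ with $\sum v_i=0$, $K_G(\mathbf v)$ is the number of $f\in\mathbb Z_{\ge0}^{E(G)}$ such that the net flow (outgoing minus incoming) at each vertex $u$ equals $v_u$. (Here $k^{1,b,c}_{n+2}$ has vertices $0,\dots,n+1$ and $k^{c+1,b,c}_{n+1}$ has vertices $0,\dots,n$.) *)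

theory Defs
  imports Main
begin

(* A directed multigraph on vertex set {0..N} with edges oriented i -> j for i < j is
   given by a multiplicity function mult i j.  Its edges are the triples (i, j, k)
   with i < j <= N and k < mult i j (k distinguishes parallel copies). *)
definition mg_edges :: "nat \<Rightarrow> (nat \<Rightarrow> nat \<Rightarrow> nat) \<Rightarrow> (nat \<times> nat \<times> nat) set" where
  "mg_edges N mult = {(i, j, k). i < j \<and> j \<le> N \<and> k < mult i j}"

definition net_flow :: "nat \<Rightarrow> (nat \<Rightarrow> nat \<Rightarrow> nat) \<Rightarrow> (nat \<times> nat \<times> nat \<Rightarrow> nat) \<Rightarrow> nat \<Rightarrow> int" where
  "net_flow N mult f u =
     int (\<Sum>e\<in>{e \<in> mg_edges N mult. fst e = u}. f e)
   - int (\<Sum>e\<in>{e \<in> mg_edges N mult. fst (snd e) = u}. f e)"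

definition kostant :: "nat \<Rightarrow> (nat \<Rightarrow> nat \<Rightarrow> nat) \<Rightarrow> (nat \<Rightarrow> int) \<Rightarrow> nat" where
  "kostant N mult v = card {f :: nat \<times> nat \<times> nat \<Rightarrow> nat.
      (\<forall>e. e \<notin> mg_edges N mult \<longrightarrow> f e = 0) \<and>
      (\<forall>u \<le> N. net_flow N mult f u = v u)}"

(* multiplicities of k_{m+2}^{a,b,c} on vertices {0..m+1} *)
definition k_mult :: "nat \<Rightarrow> nat \<Rightarrow> nat \<Rightarrow> nat \<Rightarrow> nat \<Rightarrow> nat \<Rightarrow> nat" where
  "k_mult m a b c i j =
     (if i = 0 \<and> 1 \<le> j \<and> j \<le> m then a
      else if 1 \<le> i \<and> i \<le> m \<and> j = m + 1 then b
      else if 1 \<le> i \<and> i < j \<and> j \<le> m then c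
      else 0)"

definition K_k :: "nat \<Rightarrow> nat \<Rightarrow> nat \<Rightarrow> nat \<Rightarrow> (nat \<Rightarrow> int) \<Rightarrow> nat" where
  "K_k m a b c v = kostant (m + 1) (k_mult m a b c) v"

end

theory Submission
  imports Defs
begin

lemma mg_fin: "finite (mg_edges N M)"
proof -
  have "mg_edges N M \<subseteq> (SIGMA i:{..N}. SIGMA j:{..N}. {..<M i j})"
    by (auto simp: mg_edges_def)
  moreover have "finite (SIGMA i:{..N}. SIGMA j:{..N}. {..<M i j})"
    by (intro finite_SigmaI) auto
  ultimately show ?thesis by (rule finite_subset)
qed

lemma net_low:
  assumes "\<And>e. fst e < t \<Longrightarrow> f e = 0" and "u < t"
  shows "net_flow N M f u = 0"
proof -
  have "(\<Sum>e\<in>{e \<in> mg_edges N M. fst e = u}. f e) = 0"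
    using assms by (intro sum.neutral) auto
  moreover have "(\<Sum>e\<in>{e \<in> mg_edges N M. fst (snd e) = u}. f e) = 0"
    using assms by (intro sum.neutral) (auto simp: mg_edges_def)
  ultimately show ?thesis by (simp add: net_flow_def)
qed

lemma net_step:
  assumes out: "\<And>e. e \<notin> mg_edges N M \<Longrightarrow> f e = 0"
    and low: "\<And>e. fst e < t \<Longrightarrow> f e = 0" and z: "net_flow N M f t = 0"
    and e: "fst e < Suc t"
  shows "f e = 0"
proof (cases "fst e < t")
  case True then show ?thesis using low by auto
next
  case False
  hence et: "fst e = t" using e by auto
  have "(\<Sum>e\<in>{e \<in> mg_edges N M. fst (snd e) = t}. f e) = 0"
    using low by (intro sum.neutral) (auto simp: mg_edges_def)
  moreover have "int (\<Sum>e\<in>{e \<in> mg_edges N M. fst e = t}. f e)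
       - int (\<Sum>e\<in>{e \<in> mg_edges N M. fst (snd e) = t}. f e) = 0"
    using z unfolding net_flow_def .
  ultimately have s0: "(\<Sum>e\<in>{e \<in> mg_edges N M. fst e = t}. f e) = 0"
    by linarith
  have fin: "finite {e \<in> mg_edges N M. fst e = t}" using mg_fin by auto
  show ?thesis
  proof (cases "e \<in> mg_edges N M")
    case True
    have "\<forall>x\<in>{e \<in> mg_edges N M. fst e = t}. f x = 0" using s0 fin by (simp only: sum_eq_0_iff)
    then show ?thesis using True et by blast
  next
    case False then show ?thesis using out by auto
  qed
qed

definition sh :: "nat \<times> nat \<times> nat \<Rightarrow> nat \<times> nat \<times> nat" where
  "sh e = (Suc (fst e), Suc (fst (snd e)), snd (snd e))"

definition psi :: "(nat \<times> nat \<times> nat \<Rightarrow> nat) \<Rightarrow> nat \<times> nat \<times> nat \<Rightarrow> nat" where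
  "psi f e = (if 1 \<le> fst e then f (sh e) else 0)"

definition phi :: "(nat \<times> nat \<times> nat \<Rightarrow> nat) \<Rightarrow> nat \<times> nat \<times> nat \<Rightarrow> nat" where
  "phi g e = (if 2 \<le> fst e then g (fst e - 1, fst (snd e) - 1, snd (snd e)) else 0)"

lemma inj_sh: "inj sh"
  by (auto simp: inj_def sh_def prod_eq_iff)

lemma mult_shift:
  assumes "n > 0" "1 \<le> i"
  shows "k_mult (n - 1) (c + 1) b c i j = k_mult n 1 b c (Suc i) (Suc j)"
  using assms by (auto simp: k_mult_def)

lemma edge_shift:
  assumes "n > 0" "1 \<le> fst e"
  shows "(sh e \<in> mg_edges (n + 1) (k_mult n 1 b c)) =
         (e \<in> mg_edges (n - 1 + 1) (k_mult (n - 1) (c + 1) b c))"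
  using assms mult_shift[OF assms(1) assms(2), of c b "fst (snd e)"]
  by (cases e) (auto simp: mg_edges_def sh_def)

lemma out_set:
  assumes "n > 0" "1 \<le> u"
  shows "{e \<in> mg_edges (n + 1) (k_mult n 1 b c). fst e = Suc u} =
         sh ` {e \<in> mg_edges (n - 1 + 1) (k_mult (n - 1) (c + 1) b c). fst e = u}"
proof
  show "sh ` {e \<in> mg_edges (n - 1 + 1) (k_mult (n - 1) (c + 1) b c). fst e = u}
        \<subseteq> {e \<in> mg_edges (n + 1) (k_mult n 1 b c). fst e = Suc u}"
    using edge_shift[OF assms(1)] assms by (auto simp: sh_def)
next
  show "{e \<in> mg_edges (n + 1) (k_mult n 1 b c). fst e = Suc u} \<subseteq>
         sh ` {e \<in> mg_edges (n - 1 + 1) (k_mult (n - 1) (c + 1) b c). fst e = u}"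
  proof
    fix e assume e: "e \<in> {e \<in> mg_edges (n + 1) (k_mult n 1 b c). fst e = Suc u}"
    obtain i j k where ijk: "e = (i, j, k)" by (cases e)
    have j: "j \<ge> 1" using e ijk by (auto simp: mg_edges_def)
    define e' where "e' = (u, j - 1, k)"
    have "sh e' = e" using ijk e j by (auto simp: e'_def sh_def)
    moreover have "e' \<in> mg_edges (n - 1 + 1) (k_mult (n - 1) (c + 1) b c)"
      using edge_shift[OF assms(1), of e' b c] e \<open>sh e' = e\<close> assms by (auto simp: e'_def)
    ultimately show "e \<in> sh ` {e \<in> mg_edges (n - 1 + 1) (k_mult (n - 1) (c + 1) b c). fst e = u}"
      by (auto simp: e'_def)
  qed
qed

lemma in_set:
  assumes "n > 0"
  shows "{e \<in> mg_edges (n + 1) (k_mult n 1 b c). fst (snd e) = Suc u \<and> 2 \<le> fst e} =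
         sh ` {e \<in> mg_edges (n - 1 + 1) (k_mult (n - 1) (c + 1) b c). fst (snd e) = u \<and> 1 \<le> fst e}"
proof
  show "sh ` {e \<in> mg_edges (n - 1 + 1) (k_mult (n - 1) (c + 1) b c). fst (snd e) = u \<and> 1 \<le> fst e}
        \<subseteq> {e \<in> mg_edges (n + 1) (k_mult n 1 b c). fst (snd e) = Suc u \<and> 2 \<le> fst e}"
    using edge_shift[OF assms(1)] assms by (auto simp: sh_def)
next
  show "{e \<in> mg_edges (n + 1) (k_mult n 1 b c). fst (snd e) = Suc u \<and> 2 \<le> fst e} \<subseteq>
         sh ` {e \<in> mg_edges (n - 1 + 1) (k_mult (n - 1) (c + 1) b c). fst (snd e) = u \<and> 1 \<le> fst e}"
  proof
    fix e assume e: "e \<in> {e \<in> mg_edges (n + 1) (k_mult n 1 b c). fst (snd e) = Suc u \<and> 2 \<le> fst e}"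
    obtain i j k where ijk: "e = (i, j, k)" by (cases e)
    define e' where "e' = (i - 1, u, k)"
    have "sh e' = e" using ijk e by (auto simp: e'_def sh_def)
    moreover have "e' \<in> mg_edges (n - 1 + 1) (k_mult (n - 1) (c + 1) b c)"
      using edge_shift[OF assms(1), of e' b c] e \<open>sh e' = e\<close> ijk by (auto simp: e'_def)
    ultimately show "e \<in> sh ` {e \<in> mg_edges (n - 1 + 1) (k_mult (n - 1) (c + 1) b c). fst (snd e) = u \<and> 1 \<le> fst e}"
      using ijk e by (intro image_eqI[of _ _ e']) (auto simp: e'_def)
  qed
qed



lemma net_shift:
  assumes n: "n > 0" and u: "1 \<le> u" and low: "\<And>e. fst e < 2 \<Longrightarrow> f e = 0"
  shows "net_flow (n + 1) (k_mult n 1 b c) f (Suc u) =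
         net_flow (n - 1 + 1) (k_mult (n - 1) (c + 1) b c) (psi f) u"
proof -
  let ?E1 = "mg_edges (n + 1) (k_mult n 1 b c)"
  let ?E2 = "mg_edges (n - 1 + 1) (k_mult (n - 1) (c + 1) b c)"
  have inj: "inj_on sh A" for A using inj_on_subset[OF inj_sh subset_UNIV] .
  have o: "(\<Sum>e\<in>{e \<in> ?E1. fst e = Suc u}. f e) = (\<Sum>e\<in>{e \<in> ?E2. fst e = u}. psi f e)"
  proof -
    have "(\<Sum>e\<in>{e \<in> ?E1. fst e = Suc u}. f e) = (\<Sum>e\<in>sh ` {e \<in> ?E2. fst e = u}. f e)"
      using out_set[OF n u, of b c] by simp
    also have "\<dots> = (\<Sum>e\<in>{e \<in> ?E2. fst e = u}. f (sh e))"
      by (rule sum.reindex_cong[OF inj refl]) simp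
    also have "\<dots> = (\<Sum>e\<in>{e \<in> ?E2. fst e = u}. psi f e)"
      using u by (intro sum.cong) (auto simp: psi_def)
    finally show ?thesis .
  qed
  have i: "(\<Sum>e\<in>{e \<in> ?E1. fst (snd e) = Suc u}. f e) = (\<Sum>e\<in>{e \<in> ?E2. fst (snd e) = u}. psi f e)"
  proof -
    have "(\<Sum>e\<in>{e \<in> ?E1. fst (snd e) = Suc u}. f e) =
          (\<Sum>e\<in>{e \<in> ?E1. fst (snd e) = Suc u \<and> 2 \<le> fst e}. f e)"
      using mg_fin[of "n+1" "k_mult n 1 b c"] low
      apply (intro sum.mono_neutral_right)
        apply auto
      by (metis gr_implies_not0 not_le)
    also have "\<dots> = (\<Sum>e\<in>sh ` {e \<in> ?E2. fst (snd e) = u \<and> 1 \<le> fst e}. f e)"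
      using in_set[OF n, of b c u] by simp
    also have "\<dots> = (\<Sum>e\<in>{e \<in> ?E2. fst (snd e) = u \<and> 1 \<le> fst e}. f (sh e))"
      by (rule sum.reindex_cong[OF inj refl]) simp
    also have "\<dots> = (\<Sum>e\<in>{e \<in> ?E2. fst (snd e) = u \<and> 1 \<le> fst e}. psi f e)"
      by (intro sum.cong) (auto simp: psi_def)
    also have "\<dots> = (\<Sum>e\<in>{e \<in> ?E2. fst (snd e) = u}. psi f e)"
      using mg_fin[of "n-1+1" "k_mult (n - 1) (c + 1) b c"]
      by (intro sum.mono_neutral_left) (auto simp: psi_def)
    finally show ?thesis .
  qed
  show ?thesis unfolding net_flow_def using o i by simp
qed

theorem proposition5p6:
  fixes b n c :: nat and a :: "nat \<Rightarrow> int"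
  assumes "b > 0" and "n > 0"
  shows "K_k n 1 b c
           (\<lambda>j. if j \<le> 1 then 0 else if j \<le> n then a j
                 else if j = n + 1 then - (\<Sum>i=2..n. a i) else 0)
       = K_k (n - 1) (c + 1) b c
           (\<lambda>j. if j = 0 then 0 else if j \<le> n - 1 then a (j + 1)
                 else if j = n then - (\<Sum>i=2..n. a i) else 0)"
proof -
  have n: "n > 0" by fact
  define v1 where "v1 = (\<lambda>j. if j \<le> 1 then 0 else if j \<le> n then a j
                 else if j = n + 1 then - (\<Sum>i=2..n. a i) else (0::int))"
  define v2 where "v2 = (\<lambda>j. if j = 0 then 0 else if j \<le> n - 1 then a (j + 1)
                 else if j = n then - (\<Sum>i=2..n. a i) else (0::int))"
  let ?M1 = "k_mult n 1 b c"
  let ?M2 = "k_mult (n - 1) (c + 1) b c"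
  let ?E1 = "mg_edges (n + 1) ?M1"
  let ?E2 = "mg_edges (n - 1 + 1) ?M2"
  define S1 where "S1 = {f :: nat \<times> nat \<times> nat \<Rightarrow> nat.
      (\<forall>e. e \<notin> ?E1 \<longrightarrow> f e = 0) \<and> (\<forall>u \<le> n + 1. net_flow (n + 1) ?M1 f u = v1 u)}"
  define S2 where "S2 = {f :: nat \<times> nat \<times> nat \<Rightarrow> nat.
      (\<forall>e. e \<notin> ?E2 \<longrightarrow> f e = 0) \<and> (\<forall>u \<le> n - 1 + 1. net_flow (n - 1 + 1) ?M2 f u = v2 u)}"
  have vv: "v1 (Suc u) = v2 u" if "1 \<le> u" "u \<le> n" for u
    using that by (auto simp: v1_def v2_def)
  have a: "f e = 0" if f: "f \<in> S1" and e: "fst e < 2" for f e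
  proof -
    have out: "\<And>e. e \<notin> ?E1 \<Longrightarrow> f e = 0" using f by (auto simp: S1_def)
    have z0: "net_flow (n + 1) ?M1 f 0 = 0" using f by (auto simp: S1_def v1_def)
    have z1: "net_flow (n + 1) ?M1 f 1 = 0" using f by (auto simp: S1_def v1_def)
    have l0: "\<And>e. fst e < Suc 0 \<Longrightarrow> f e = 0"
      using net_step[OF out _ z0] by auto
    have "\<And>e. fst e < Suc 1 \<Longrightarrow> f e = 0"
      using net_step[OF out l0 z1[simplified]] by simp
    then show ?thesis using e by simp
  qed
  have bb: "g e = 0" if g: "g \<in> S2" and e: "fst e < 1" for g e
  proof -
    have out: "\<And>e. e \<notin> ?E2 \<Longrightarrow> g e = 0" using g by (auto simp: S2_def)
    have z0: "net_flow (n - 1 + 1) ?M2 g 0 = 0" using g by (auto simp: S2_def v2_def)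
    show ?thesis using net_step[OF out _ z0, of e] e by auto
  qed
  have c: "phi (psi f) = f" if f: "f \<in> S1" for f
  proof
    fix e :: "nat \<times> nat \<times> nat"
    obtain i j k where e: "e = (i, j, k)" by (cases e)
    show "phi (psi f) e = f e"
    proof (cases "2 \<le> i")
      case False then show ?thesis using a[OF f, of e] e by (simp add: phi_def)
    next
      case True
      show ?thesis
      proof (cases "j = 0")
        case False then show ?thesis using True e by (auto simp: phi_def psi_def sh_def)
      next
        case j: True
        have "e \<notin> ?E1" "(i, 1, k) \<notin> ?E1" using e j True by (auto simp: mg_edges_def)
        then show ?thesis using f True e j by (simp add: phi_def psi_def sh_def S1_def)
      qed
    qed
  qed
  have d: "psi (phi g) = g" if g: "g \<in> S2" for g
  proof
    fix e :: "nat \<times> nat \<times> nat"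
    show "psi (phi g) e = g e"
      using bb[OF g, of e] by (cases e) (auto simp: psi_def phi_def sh_def not_le)
  qed
  have e: "psi f \<in> S2" if f: "f \<in> S1" for f
  proof -
    have sup: "psi f e = 0" if "e \<notin> ?E2" for e
    proof (cases "1 \<le> fst e")
      case True
      then have "sh e \<notin> ?E1" using edge_shift[OF n True, of b c] that by simp
      moreover have "\<forall>e. e \<notin> ?E1 \<longrightarrow> f e = 0" using f by (simp add: S1_def)
      ultimately have "f (sh e) = 0" by blast
      then show ?thesis using True by (simp add: psi_def)
    qed (simp add: psi_def)
    have nf: "net_flow (n - 1 + 1) ?M2 (psi f) u = v2 u" if "u \<le> n - 1 + 1" for u
    proof (cases "u = 0")
      case True
      then show ?thesis by (simp add: v2_def net_low[of 1 "psi f"] psi_def)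
    next
      case False
      have "net_flow (n - 1 + 1) ?M2 (psi f) u = net_flow (n + 1) ?M1 f (Suc u)"
        using net_shift[OF n, of u f b c] False a[OF f] by simp
      also have "\<dots> = v1 (Suc u)" using f that n by (simp add: S1_def)
      also have "\<dots> = v2 u" using vv False that n by simp
      finally show ?thesis .
    qed
    show ?thesis using sup nf by (simp add: S2_def)
  qed
  have f: "phi g \<in> S1" if g: "g \<in> S2" for g
  proof -
    have low: "phi g e = 0" if "fst e < 2" for e using that by (simp add: phi_def)
    have sup: "phi g e = 0" if ne: "e \<notin> ?E1" for e
    proof (cases "2 \<le> fst e")
      case True
      obtain i j k where ee: "e = (i, j, k)" by (cases e)
      define e' where "e' = (i - 1, j - 1, k)"
      have "g e' = 0"
      proof (cases "j = 0")
        case True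
        then have "e' \<notin> ?E2" by (simp add: e'_def mg_edges_def)
        then show ?thesis using g unfolding S2_def by blast
      next
        case False
        then have "sh e' = e" using ee \<open>2 \<le> fst e\<close> by (simp add: e'_def sh_def)
        then have "e' \<notin> ?E2" using edge_shift[OF n, of e' b c] ee \<open>2 \<le> fst e\<close> ne
          by (simp add: e'_def)
        then show ?thesis using g unfolding S2_def by blast
      qed
      then show ?thesis using ee by (simp add: phi_def e'_def)
    qed (simp add: phi_def)
    have nf: "net_flow (n + 1) ?M1 (phi g) u = v1 u" if "u \<le> n + 1" for u
    proof (cases "u < 2")
      case True
      then show ?thesis using net_low[of 2 "phi g", OF low True] by (auto simp: v1_def)
    next
      case False
      then obtain u' where u': "u = Suc u'" "1 \<le> u'" by (cases u) auto
      have "net_flow (n + 1) ?M1 (phi g) u = net_flow (n - 1 + 1) ?M2 (psi (phi g)) u'"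
        using net_shift[OF n u'(2), of "phi g" b c] low u' by simp
      also have "\<dots> = v2 u'" using d[OF g] g that u' n by (simp add: S2_def)
      also have "\<dots> = v1 u" using vv u' that n by simp
      finally show ?thesis .
    qed
    show ?thesis using sup nf by (simp add: S1_def)
  qed
  have "bij_betw psi S1 S2"
    by (rule bij_betw_byWitness[where f' = phi]) (use c d e f in auto)
  then have "card S1 = card S2" by (rule bij_betw_same_card)
  then show ?thesis
    unfolding K_k_def kostant_def S1_def S2_def v1_def v2_def by simp
qed

end
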